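(* Fix $R\in\mathbb P_d$ and set $\operatorname{b}_R(P,Q):=\sqrt{\operatorname{B}_R(P,Q)}$ for $P,Q\in\mathbb P_d$. Then for all $P,Q,S\in\mathbb P_d$: (1) $\operatorname{b}_R(P,Q)=\operatorname{b}_R(Q,P)$; (2) $\operatorname{B}_R(P,Q)\ge 0$, so $\operatorname{b}_R(P,Q)\ge0$ is well-defined, and $\operatorname{b}_R(P,Q)=0$ if and only if $P=Q$; (3) $\operatorname{b}_R(P,Q)\le \operatorname{b}_R(P,S)+\operatorname{b}_R(S,Q)$.
   Context: $\mathbb P_d$ is the set of $d\times d$ complex positive definite matrices. The generalized fidelity is $\operatorname{F}_R(P,Q):=\operatorname{Tr}\big[\sqrt{R^{1/2}PR^{1/2}}\,R^{-1}\sqrt{R^{1/2}QR^{1/2}}\big]$ and the squared generalized Bures distance is $\operatorname{B}_R(P,Q):=\operatorname{Tr}[P+Q]-2\,\mathrm{Re}\,\operatorname{F}_R(P,Q)$. *)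

theory Defs
  imports "HOL-Analysis.Analysis"
begin

text \<open>Complex d x d matrices are represented as complex^'d^'d, with the dimension d
given by the finite index type 'd.\<close>

definition conj_transpose :: "complex^'n^'m \<Rightarrow> complex^'m^'n" where
  "conj_transpose A = (\<chi> i j. cnj (A $ j $ i))"

definition hermitian :: "complex^'n^'n \<Rightarrow> bool" where
  "hermitian A \<longleftrightarrow> conj_transpose A = A"

definition qform :: "complex^'n^'n \<Rightarrow> complex^'n \<Rightarrow> complex" where
  "qform A x = (\<Sum>i\<in>UNIV. cnj (x $ i) * ((A *v x) $ i))"

definition pos_def :: "complex^'n^'n \<Rightarrow> bool" where
  "pos_def A \<longleftrightarrow> hermitian A \<and> (\<forall>x. x \<noteq> 0 \<longrightarrow> 0 < Re (qform A x))"

definition pos_semidef :: "complex^'n^'n \<Rightarrow> bool" where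
  "pos_semidef A \<longleftrightarrow> hermitian A \<and> (\<forall>x. 0 \<le> Re (qform A x))"

definition msqrt :: "complex^'n^'n \<Rightarrow> complex^'n^'n" where
  "msqrt A = (THE B. pos_semidef B \<and> B ** B = A)"

definition gen_fidelity :: "complex^'n^'n \<Rightarrow> complex^'n^'n \<Rightarrow> complex^'n^'n \<Rightarrow> complex" where
  "gen_fidelity R P Q =
     trace (msqrt (msqrt R ** P ** msqrt R) ** matrix_inv R ** msqrt (msqrt R ** Q ** msqrt R))"

text \<open>Squared generalized Bures distance B_R(P,Q) = Tr[P+Q] - 2 Re F_R(P,Q)
  (Tr[P+Q] is real for Hermitian P, Q; we take its real part).\<close>
definition gen_bures_sq :: "complex^'n^'n \<Rightarrow> complex^'n^'n \<Rightarrow> complex^'n^'n \<Rightarrow> real" where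
  "gen_bures_sq R P Q = Re (trace (P + Q)) - 2 * Re (gen_fidelity R P Q)"

definition gen_bures :: "complex^'n^'n \<Rightarrow> complex^'n^'n \<Rightarrow> complex^'n^'n \<Rightarrow> real" where
  "gen_bures R P Q = sqrt (gen_bures_sq R P Q)"

end

theory Submission
  imports Defs "HOL-Computational_Algebra.Polynomial"
begin


lemma quad_zero:
  fixes a b :: real
  assumes "\<And>t. 0 \<le> 2*t*a + t^2*b"
  shows "a = 0"
proof (rule ccontr)
  assume a: "a \<noteq> 0"
  define c where "c = \<bar>b\<bar> + 1"
  have c: "c > 0" "b \<le> c - 1" unfolding c_def by auto
  define t where "t = - a / c"
  have "0 \<le> 2*t*a + t^2*b" by (rule assms)
  also have "2*t*a + t^2*b = a^2 / c^2 * (b - 2*c)"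
    unfolding t_def using c by (simp add: field_simps power2_eq_square)
  also have "\<dots> < 0"
  proof (rule mult_pos_neg)
    show "0 < a^2/c^2" using a c by simp
    show "b - 2*c < 0" using c by simp
  qed
  finally show False by simp
qed

lemma eig_in_subspace:
  fixes f :: "'a::euclidean_space \<Rightarrow> 'a"
  assumes lin: "linear f" and sa: "\<And>x y. f x \<bullet> y = x \<bullet> f y"
    and W: "subspace W" "f ` W \<subseteq> W" and w: "w \<in> W" "w \<noteq> 0"
  shows "\<exists>x\<in>W. x \<noteq> 0 \<and> (\<exists>m. f x = m *\<^sub>R x)"
proof -
  define K where "K = W \<inter> sphere 0 1"
  have cK: "compact K" unfolding K_def
    by (simp add: W(1) closed_Int_compact closed_subspace)
  have "w /\<^sub>R norm w \<in> K" unfolding K_def using w W(1)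
    by (simp add: subspace_scale)
  hence neK: "K \<noteq> {}" by auto
  have cont: "continuous_on K (\<lambda>x. x \<bullet> f x)"
    using lin by (intro continuous_intros linear_continuous_on) (simp add: linear_conv_bounded_linear)
  obtain x0 where x0: "x0 \<in> K" and mx: "\<And>y. y \<in> K \<Longrightarrow> y \<bullet> f y \<le> x0 \<bullet> f x0"
    using continuous_attains_sup[OF cK neK cont] by blast
  define m where "m = x0 \<bullet> f x0"
  have x0W: "x0 \<in> W" and nx0: "norm x0 = 1" using x0 unfolding K_def by auto
  have bound: "x \<bullet> f x \<le> m * (x \<bullet> x)" if xW: "x \<in> W" for x
  proof (cases "x = 0")
    case True then show ?thesis using lin by (simp add: linear_0)
  next
    case False
    define y where "y = x /\<^sub>R norm x"
    have "y \<in> K" unfolding K_def y_def using xW W(1) False by (simp add: subspace_scale)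
    hence "y \<bullet> f y \<le> m" using mx m_def by simp
    moreover have "y \<bullet> f y = (x \<bullet> f x) / (norm x)^2"
      unfolding y_def using lin by (simp add: linear_scale power2_eq_square divide_inverse)
    ultimately have "x \<bullet> f x \<le> m * (norm x)^2" using False
      by (simp add: divide_le_eq)
    then show ?thesis by (simp add: power2_norm_eq_inner)
  qed
  define g where "g = m *\<^sub>R x0 - f x0"
  have gW: "g \<in> W" unfolding g_def using W x0W
    by (meson image_subset_iff subspace_diff subspace_scale)
  have "0 \<le> 2*t*(g \<bullet> g) + t^2*(m*(g \<bullet> g) - g \<bullet> f g)" for t
  proof -
    let ?z = "x0 + t *\<^sub>R g"
    have zW: "?z \<in> W" using W(1) x0W gW by (simp add: subspace_add subspace_scale)
    have "?z \<bullet> f ?z \<le> m * (?z \<bullet> ?z)" using bound zW by blast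
    moreover have "f ?z = f x0 + t *\<^sub>R f g" using lin by (simp add: linear_add linear_scale)
    moreover have "x0 \<bullet> x0 = 1" using nx0 by (simp add: norm_eq_1)
    moreover have "x0 \<bullet> f g = f x0 \<bullet> g" using sa by simp
    ultimately have "0 \<le> m * (?z \<bullet> ?z) - ?z \<bullet> f ?z" by simp
    also have "m * (?z \<bullet> ?z) - ?z \<bullet> f ?z = 2*t*(g \<bullet> (m *\<^sub>R x0 - f x0)) + t^2*(m*(g \<bullet> g) - g \<bullet> f g)"
      using \<open>x0 \<bullet> x0 = 1\<close> \<open>x0 \<bullet> f g = f x0 \<bullet> g\<close> \<open>f ?z = f x0 + t *\<^sub>R f g\<close>
      by (simp add: inner_add_left inner_add_right inner_diff_right inner_commute m_def algebra_simps power2_eq_square)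
    finally show ?thesis unfolding g_def .
  qed
  hence "g \<bullet> g = 0" by (rule quad_zero)
  hence "g = 0" by simp
  hence "f x0 = m *\<^sub>R x0" unfolding g_def by simp
  moreover have "x0 \<noteq> 0" using nx0 by auto
  ultimately show ?thesis using x0W by blast
qed

lemma eig_span:
  fixes f :: "'a::euclidean_space \<Rightarrow> 'a"
  assumes lin: "linear f" and sa: "\<And>x y. f x \<bullet> y = x \<bullet> f y"
  shows "span {v. \<exists>m. f v = m *\<^sub>R v} = UNIV"
proof (rule ccontr)
  define S where "S = {v. \<exists>m. f v = m *\<^sub>R v}"
  assume ne: "span {v. \<exists>m. f v = m *\<^sub>R v} \<noteq> UNIV"
  hence "dim S \<noteq> DIM('a)" unfolding S_def using dim_eq_full by auto
  hence "dim S < DIM('a)" using dim_subset_UNIV[of S] by simp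
  then obtain w where w: "w \<noteq> 0" "\<And>y. y \<in> span S \<Longrightarrow> orthogonal w y"
    using orthogonal_to_subspace_exists by blast
  define W where "W = {y. \<forall>x \<in> span S. orthogonal x y}"
  have sW: "subspace W" unfolding W_def by (rule subspace_orthogonal_to_vectors)
  have fS: "f ` S \<subseteq> S" unfolding S_def using lin by (auto simp: linear_scale)
  have fspan: "f ` span S \<subseteq> span S"
    using span_linear_image[OF lin, of S] fS by (metis span_mono)
  have fW: "f ` W \<subseteq> W"
  proof
    fix z assume "z \<in> f ` W"
    then obtain y where y: "y \<in> W" "z = f y" by blast
    show "z \<in> W" unfolding W_def
    proof (clarify)
      fix x assume x: "x \<in> span S"
      have "f x \<in> span S" using fspan x by blast
      hence "orthogonal (f x) y" using y unfolding W_def by blast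
      thus "orthogonal x z" using y sa unfolding orthogonal_def by (simp add: inner_commute)
    qed
  qed
  have wW: "w \<in> W" unfolding W_def using w(2) by (simp add: orthogonal_commute)
  obtain x where x: "x \<in> W" "x \<noteq> 0" "\<exists>m. f x = m *\<^sub>R x"
    using eig_in_subspace[OF lin sa sW fW wW w(1)] by blast
  hence "x \<in> span S" unfolding S_def by (simp add: span_base)
  hence "orthogonal x x" using x(1) unfolding W_def by blast
  thus False using x(2) by (simp add: orthogonal_def)
qed



definition cinner :: "complex^'n \<Rightarrow> complex^'n \<Rightarrow> complex" where
  "cinner x y = (\<Sum>i\<in>UNIV. cnj (x $ i) * y $ i)"

lemma inner_cinner: "x \<bullet> y = Re (cinner x y)"
  by (simp add: cinner_def inner_vec_def inner_complex_def)

lemma qform_cinner: "qform A x = cinner x (A *v x)"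
  by (simp add: qform_def cinner_def)

lemma Re_qform: "Re (qform A x) = x \<bullet> (A *v x)"
  by (simp add: qform_cinner inner_cinner)

lemma cinner_adj: "cinner (A *v x) y = cinner x (conj_transpose A *v y)"
proof -
  have "cinner (A *v x) y = (\<Sum>i\<in>UNIV. \<Sum>j\<in>UNIV. cnj (A$i$j) * cnj (x$j) * y$i)"
    by (simp add: cinner_def matrix_vector_mult_def sum_distrib_right mult.assoc)
  also have "\<dots> = (\<Sum>j\<in>UNIV. \<Sum>i\<in>UNIV. cnj (A$i$j) * cnj (x$j) * y$i)"
    by (rule sum.swap)
  also have "\<dots> = cinner x (conj_transpose A *v y)"
    by (simp add: cinner_def matrix_vector_mult_def conj_transpose_def sum_distrib_left mult_ac)
  finally show ?thesis .
qed

lemma herm_sa: "hermitian A \<Longrightarrow> (A *v x) \<bullet> y = x \<bullet> (A *v y)"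
  by (simp add: inner_cinner cinner_adj hermitian_def)

lemma mv_scaleR: "(A::complex^'n^'m) *v (c *\<^sub>R x) = c *\<^sub>R (A *v x)"
  by (simp add: matrix_vector_mult_def vec_eq_iff scaleR_conv_of_real[where 'a=complex] sum_distrib_left mult_ac)

lemma mv_linear: "linear (\<lambda>x. (A::complex^'n^'m) *v x)"
  by (rule linearI) (simp_all add: matrix_vector_right_distrib mv_scaleR)

lemma scaleR_mv: "(c *\<^sub>R (A::complex^'n^'m)) *v x = c *\<^sub>R (A *v x)"
  by (simp add: matrix_vector_mult_def vec_eq_iff scaleR_conv_of_real[where 'a=complex] sum_distrib_left mult_ac)

lemma ct_mult: "conj_transpose ((A::complex^'n^'m) ** (B::complex^'p^'n)) = conj_transpose B ** conj_transpose A"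
  by (simp add: conj_transpose_def matrix_matrix_mult_def vec_eq_iff mult.commute)

lemma ct_add: "conj_transpose ((A::complex^'n^'m) + B) = conj_transpose A + conj_transpose B"
  by (simp add: conj_transpose_def vec_eq_iff)

lemma ct_scaleR: "conj_transpose (c *\<^sub>R (A::complex^'n^'m)) = c *\<^sub>R conj_transpose A"
  by (simp add: conj_transpose_def vec_eq_iff scaleR_conv_of_real[where 'a=complex])

lemma ct_mat: "conj_transpose (mat 1 :: complex^'n^'n) = mat 1"
  by (simp add: conj_transpose_def vec_eq_iff mat_def)

lemma ct_ct: "conj_transpose (conj_transpose (A::complex^'n^'m)) = A"
  by (simp add: conj_transpose_def vec_eq_iff)

lemma pos_def_inner: "pos_def A \<longleftrightarrow> hermitian A \<and> (\<forall>x. x \<noteq> 0 \<longrightarrow> 0 < x \<bullet> (A *v x))"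
  by (simp add: pos_def_def Re_qform)

lemma pos_semidef_inner: "pos_semidef A \<longleftrightarrow> hermitian A \<and> (\<forall>x. 0 \<le> x \<bullet> (A *v x))"
  by (simp add: pos_semidef_def Re_qform)

lemma trace_frob: "Re (trace (conj_transpose X ** (Y::complex^'n^'m))) = X \<bullet> Y"
proof -
  have "Re (trace (conj_transpose X ** Y)) = (\<Sum>i\<in>UNIV. \<Sum>k\<in>UNIV. X$k$i \<bullet> Y$k$i)"
    by (simp add: trace_def matrix_matrix_mult_def conj_transpose_def inner_complex_def)
  also have "\<dots> = (\<Sum>k\<in>UNIV. \<Sum>i\<in>UNIV. X$k$i \<bullet> Y$k$i)" by (rule sum.swap)
  also have "\<dots> = X \<bullet> Y" by (simp add: inner_vec_def)
  finally show ?thesis .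
qed

lemma mat_eq_on_span:
  fixes A B :: "complex^'n^'m"
  assumes "span S = UNIV" "\<And>v. v \<in> S \<Longrightarrow> A *v v = B *v v"
  shows "A = B"
proof -
  have "A *v x = B *v x" for x
    using linear_eq_on_span[OF mv_linear[of A] mv_linear[of B], of S] assms by auto
  thus ?thesis by (simp add: matrix_eq)
qed



lemma interp:
  fixes g :: "real \<Rightarrow> real"
  assumes "finite L"
  shows "\<exists>p::real poly. \<forall>x\<in>L. poly p x = g x"
  using assms
proof (induction L rule: finite_induct)
  case empty then show ?case by auto
next
  case (insert u L)
  then obtain p where p: "\<forall>x\<in>L. poly p x = g x" by blast
  define q where "q = (\<Prod>k\<in>L. [:-k, 1:])"
  have pq: "poly q x = (\<Prod>k\<in>L. x - k)" for x unfolding q_def by (simp add: poly_prod)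
  have nz: "poly q u \<noteq> 0" using pq insert(1,2) by auto
  define c where "c = (g u - poly p u) / poly q u"
  have "\<forall>x\<in>insert u L. poly (p + smult c q) x = g x"
  proof
    fix x assume "x \<in> insert u L"
    then show "poly (p + smult c q) x = g x"
    proof
      assume "x = u" then show ?thesis using nz by (simp add: c_def)
    next
      assume x: "x \<in> L"
      have "poly q x = 0" unfolding pq using insert(1) x by (simp add: prod_zero_iff)
      then show ?thesis using p x by simp
    qed
  qed
  then show ?case by blast
qed

lemma mm_add_r: "((A::complex^'n^'m) + B) ** (C::complex^'p^'n) = A ** C + B ** C"
  by (simp add: matrix_matrix_mult_def vec_eq_iff sum.distrib distrib_right)

lemma scaleR_mm_l: "(c *\<^sub>R (A::complex^'n^'m)) ** (B::complex^'p^'n) = c *\<^sub>R (A ** B)"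
  by (simp add: matrix_matrix_mult_def vec_eq_iff scaleR_conv_of_real[where 'a=complex] sum_distrib_left mult_ac)

lemma scaleR_mm_r: "(A::complex^'n^'m) ** (c *\<^sub>R (B::complex^'p^'n)) = c *\<^sub>R (A ** B)"
  by (simp add: matrix_matrix_mult_def vec_eq_iff scaleR_conv_of_real[where 'a=complex] sum_distrib_left mult_ac)

lemma poly_mat:
  fixes A :: "complex^'n^'n"
  assumes hA: "hermitian A"
  shows "\<exists>M. hermitian M \<and> (\<forall>C. C ** A = A ** C \<longrightarrow> C ** M = M ** C)
            \<and> (\<forall>l v. A *v v = l *\<^sub>R v \<longrightarrow> M *v v = poly p l *\<^sub>R v)"
proof (induction p)
  case (pCons a q)
  then obtain M where hM: "hermitian M" and cM: "\<forall>C. C ** A = A ** C \<longrightarrow> C ** M = M ** C"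
    and eM: "\<forall>l v. A *v v = l *\<^sub>R v \<longrightarrow> M *v v = poly q l *\<^sub>R v" by blast
  define N where "N = a *\<^sub>R mat 1 + A ** M"
  have MA: "A ** M = M ** A" using cM by auto
  have "hermitian N" using hA hM MA unfolding N_def hermitian_def
    by (simp add: ct_add ct_scaleR ct_mat ct_mult)
  moreover have "\<forall>C. C ** A = A ** C \<longrightarrow> C ** N = N ** C"
  proof (intro allI impI)
    fix C assume CA: "C ** A = A ** C"
    have "C ** N = a *\<^sub>R C + C ** A ** M"
      by (simp add: N_def matrix_add_ldistrib matrix_mul_assoc scaleR_mm_r)
    also have "\<dots> = a *\<^sub>R C + A ** (C ** M)" by (simp add: CA matrix_mul_assoc)
    also have "\<dots> = a *\<^sub>R C + A ** M ** C" using cM CA by (simp add: matrix_mul_assoc)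
    also have "\<dots> = N ** C" by (simp add: N_def mm_add_r scaleR_mm_l)
    finally show "C ** N = N ** C" .
  qed
  moreover have "\<forall>l v. A *v v = l *\<^sub>R v \<longrightarrow> N *v v = poly (pCons a q) l *\<^sub>R v"
  proof (intro allI impI)
    fix l v assume Av: "A *v v = l *\<^sub>R v"
    have "N *v v = a *\<^sub>R v + A *v (M *v v)"
      by (simp add: N_def matrix_vector_mult_add_rdistrib scaleR_mv matrix_vector_mul_assoc)
    also have "\<dots> = a *\<^sub>R v + (poly q l * l) *\<^sub>R v" proof -
      have "M *v v = poly q l *\<^sub>R v" using eM Av by blast
      then show ?thesis using Av by (simp add: mv_scaleR)
    qed
    finally show "N *v v = poly (pCons a q) l *\<^sub>R v" by (simp add: algebra_simps scaleR_add_left)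
  qed
  ultimately show ?case by blast
next
  case 0
  show ?case
    by (rule exI[of _ 0]) (simp add: hermitian_def conj_transpose_def vec_eq_iff)
qed



lemma mm_diff_l: "(A::complex^'n^'m) ** ((B::complex^'p^'n) - C) = A ** B - A ** C"
  by (simp add: matrix_matrix_mult_def vec_eq_iff sum_subtractf right_diff_distrib)

lemma sqrt_exists:
  fixes A :: "complex^'n^'n"
  assumes pA: "pos_def A"
  shows "\<exists>B. pos_def B \<and> B ** B = A \<and> (\<forall>C. C ** A = A ** C \<longrightarrow> C ** B = B ** C)"
proof -
  have hA: "hermitian A" and pA': "\<And>x. x \<noteq> 0 \<Longrightarrow> 0 < x \<bullet> (A *v x)"
    using pA by (auto simp: pos_def_inner)
  define E where "E = {v. \<exists>m. A *v v = m *\<^sub>R v}"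
  have spE: "span E = UNIV" unfolding E_def
    by (rule eig_span[OF mv_linear]) (simp add: herm_sa[OF hA])
  obtain B0 where B0: "B0 \<subseteq> E" "independent B0" "E \<subseteq> span B0"
    using maximal_independent_subset[of E] by blast
  have "span E \<subseteq> span B0" using B0(3) by (simp add: span_minimal)
  hence spB0: "span B0 = UNIV" using spE by auto
  have fB0: "finite B0" using B0(2) by (rule finiteI_independent)
  have nz: "v \<noteq> 0" if "v \<in> B0" for v using B0(2) that dependent_zero by blast
  define ev where "ev v = (SOME m. A *v v = m *\<^sub>R v)" for v
  have evE: "A *v v = ev v *\<^sub>R v" if "v \<in> B0" for v
  proof -
    have "\<exists>m. A *v v = m *\<^sub>R v" using B0(1) that unfolding E_def by blast
    thus ?thesis unfolding ev_def by (rule someI_ex)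
  qed
  have evpos: "ev v > 0" if v: "v \<in> B0" for v
  proof -
    have "0 < v \<bullet> (A *v v)" using pA' nz v by blast
    also have "\<dots> = ev v * (v \<bullet> v)" using evE v by simp
    finally show ?thesis using inner_ge_zero[of v] by (auto simp: zero_less_mult_iff)
  qed
  obtain p where p: "\<forall>x\<in>ev ` B0. poly p x = sqrt (sqrt x)"
    using interp[of "ev ` B0" "\<lambda>x. sqrt (sqrt x)"] fB0 by blast
  obtain M where hM: "hermitian M" and cM: "\<forall>C. C ** A = A ** C \<longrightarrow> C ** M = M ** C"
    and eM: "\<forall>l v. A *v v = l *\<^sub>R v \<longrightarrow> M *v v = poly p l *\<^sub>R v"
    using poly_mat[OF hA, of p] by blast
  define B where "B = M ** M"
  have Bv: "B *v v = sqrt (ev v) *\<^sub>R v" if v: "v \<in> B0" for v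
  proof -
    have "M *v v = poly p (ev v) *\<^sub>R v" using eM evE[OF v] by blast
    moreover have "poly p (ev v) = sqrt (sqrt (ev v))" using p v by blast
    ultimately have Mv: "M *v v = sqrt (sqrt (ev v)) *\<^sub>R v" by simp
    have "B *v v = sqrt (sqrt (ev v)) *\<^sub>R (M *v v)"
      by (simp add: B_def matrix_vector_mul_assoc[symmetric] Mv mv_scaleR)
    also have "\<dots> = (sqrt (sqrt (ev v)) * sqrt (sqrt (ev v))) *\<^sub>R v" by (simp add: Mv)
    also have "sqrt (sqrt (ev v)) * sqrt (sqrt (ev v)) = sqrt (ev v)"
      using evpos[OF v] by simp
    finally show ?thesis .
  qed
  have BB: "B ** B = A"
  proof (rule mat_eq_on_span[OF spB0])
    fix v assume v: "v \<in> B0"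
    have "(B ** B) *v v = sqrt (ev v) *\<^sub>R (B *v v)"
      by (simp add: matrix_vector_mul_assoc[symmetric] Bv v mv_scaleR)
    also have "\<dots> = (sqrt (ev v) * sqrt (ev v)) *\<^sub>R v" by (simp add: Bv v)
    also have "sqrt (ev v) * sqrt (ev v) = ev v" using evpos[OF v] by simp
    finally show "(B ** B) *v v = A *v v" using evE[OF v] by simp
  qed
  have hB: "hermitian B" using hM unfolding B_def hermitian_def by (simp add: ct_mult)
  have "0 < x \<bullet> (B *v x)" if x: "x \<noteq> 0" for x
  proof -
    have eq: "x \<bullet> (B *v x) = (M *v x) \<bullet> (M *v x)"
      by (simp add: B_def matrix_vector_mul_assoc[symmetric] herm_sa[OF hM])
    have "M *v x \<noteq> 0"
    proof
      assume "M *v x = 0"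
      hence "B *v x = 0" by (simp add: B_def matrix_vector_mul_assoc[symmetric])
      hence "A *v x = 0" by (simp add: BB[symmetric] matrix_vector_mul_assoc[symmetric])
      thus False using pA'[OF x] by simp
    qed
    thus ?thesis unfolding eq by simp
  qed
  hence pB: "pos_def B" using hB by (simp add: pos_def_inner)
  have "\<forall>C. C ** A = A ** C \<longrightarrow> C ** B = B ** C"
  proof (intro allI impI)
    fix C assume "C ** A = A ** C"
    hence CM: "C ** M = M ** C" using cM by blast
    have "C ** B = (C ** M) ** M" by (simp add: B_def matrix_mul_assoc)
    also have "\<dots> = (M ** C) ** M" by (simp only: CM)
    also have "\<dots> = M ** (C ** M)" by (simp only: matrix_mul_assoc)
    also have "\<dots> = M ** (M ** C)" by (simp only: CM)
    also have "\<dots> = B ** C" by (simp only: B_def matrix_mul_assoc)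
    finally show "C ** B = B ** C" .
  qed
  with pB BB show ?thesis by blast
qed

lemma msqrt_props:
  fixes A :: "complex^'n^'n"
  assumes pA: "pos_def A"
  shows "pos_def (msqrt A) \<and> msqrt A ** msqrt A = A"
proof -
  obtain B where pB: "pos_def B" and BB: "B ** B = A"
    and cB: "\<forall>C. C ** A = A ** C \<longrightarrow> C ** B = B ** C"
    using sqrt_exists[OF pA] by blast
  have psB: "pos_semidef B" unfolding pos_semidef_inner
  proof (intro conjI allI)
    show "hermitian B" using pB by (simp add: pos_def_inner)
    fix x show "0 \<le> x \<bullet> (B *v x)"
      by (cases "x = 0") (use pB in \<open>auto simp: pos_def_inner intro: less_imp_le\<close>)
  qed
  have "msqrt A = B" unfolding msqrt_def
  proof (rule the_equality)
    show "pos_semidef B \<and> B ** B = A" using psB BB by simp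
  next
    fix C assume C: "pos_semidef C \<and> C ** C = A"
    have "C ** (C ** C) = (C ** C) ** C" by (rule matrix_mul_assoc)
    hence CA: "C ** A = A ** C" using C by simp
    hence CB: "C ** B = B ** C" using cB by blast
    have "(B + C) ** (B - C) = (B ** B - B ** C) + (C ** B - C ** C)"
      by (simp add: mm_add_r mm_diff_l)
    hence "(B + C) ** (B - C) = 0" using CB BB C by simp
    have inj: "y = 0" if "(B + C) *v y = 0" for y
    proof (rule ccontr)
      assume y: "y \<noteq> 0"
      have "0 < y \<bullet> (B *v y)" using pB y by (simp add: pos_def_inner)
      moreover have "0 \<le> y \<bullet> (C *v y)" using C by (simp add: pos_semidef_inner)
      ultimately have "0 < y \<bullet> (B *v y) + y \<bullet> (C *v y)" by linarith
      also have "\<dots> = y \<bullet> ((B + C) *v y)" by (simp add: matrix_vector_mult_add_rdistrib inner_add_right)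
      finally show False using that by simp
    qed
    have "(B - C) *v x = 0" for x
    proof -
      have "(B + C) *v ((B - C) *v x) = 0"
        using \<open>(B + C) ** (B - C) = 0\<close> by (simp add: matrix_vector_mul_assoc)
      thus ?thesis by (rule inj)
    qed
    hence "B - C = 0" by (simp add: matrix_eq)
    thus "C = B" by simp
  qed
  thus ?thesis using pB BB by simp
qed



lemma pd_inj: "pos_def A \<Longrightarrow> A *v x = 0 \<Longrightarrow> x = 0"
  by (metis inner_zero_right less_irrefl pos_def_inner)

lemma pd_inv:
  fixes R :: "complex^'n^'n"
  assumes "pos_def R"
  shows "R ** matrix_inv R = mat 1 \<and> matrix_inv R ** R = mat 1"
proof -
  have "\<exists>B::complex^'n^'n. B ** R = mat 1"
    using pd_inj[OF assms] by (simp add: matrix_left_invertible_ker)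
  hence "invertible R" by (simp add: invertible_left_inverse)
  hence "\<exists>A'. R ** A' = mat 1 \<and> A' ** R = mat 1" by (simp add: invertible_def)
  thus ?thesis unfolding matrix_inv_def by (rule someI_ex)
qed

definition XX :: "complex^'n^'n \<Rightarrow> complex^'n^'n \<Rightarrow> complex^'n^'n" where
  "XX R P = (msqrt R ** matrix_inv R) ** msqrt (msqrt R ** P ** msqrt R)"

lemma herm_pd: "pos_def A \<Longrightarrow> conj_transpose A = A"
  by (simp add: pos_def_def hermitian_def)

locale rctx =
  fixes R :: "complex^'n^'n"
  assumes pR: "pos_def R"
begin

definition "Rh = msqrt R"
definition "Ri = matrix_inv R"
definition "Rhi = Rh ** Ri"

lemma Rh: "pos_def Rh" "Rh ** Rh = R" using msqrt_props[OF pR] by (auto simp: Rh_def)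
lemma Rh_ct: "conj_transpose Rh = Rh" using Rh(1) by (rule herm_pd)
lemma R_ct: "conj_transpose R = R" using pR by (rule herm_pd)
lemma Ri: "R ** Ri = mat 1" "Ri ** R = mat 1" using pd_inv[OF pR] by (auto simp: Ri_def)

lemma RhR: "Rh ** R = R ** Rh"
proof -
  have "Rh ** (Rh ** Rh) = (Rh ** Rh) ** Rh" by (rule matrix_mul_assoc)
  thus ?thesis by (simp only: Rh(2))
qed

lemma RiRh: "Ri ** Rh = Rh ** Ri"
proof -
  have "Ri ** Rh = (Ri ** Rh) ** (R ** Ri)" by (simp add: Ri)
  also have "\<dots> = Ri ** ((Rh ** R) ** Ri)" by (simp only: matrix_mul_assoc)
  also have "\<dots> = Ri ** ((R ** Rh) ** Ri)" by (simp only: RhR)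
  also have "\<dots> = (Ri ** R) ** (Rh ** Ri)" by (simp only: matrix_mul_assoc)
  also have "\<dots> = Rh ** Ri" by (simp add: Ri)
  finally show ?thesis .
qed

lemma Ri_ct: "conj_transpose Ri = Ri"
proof -
  have "conj_transpose Ri ** R = mat 1"
    using arg_cong[OF Ri(1), of conj_transpose] by (simp add: ct_mult R_ct ct_mat)
  have "conj_transpose Ri = conj_transpose Ri ** (R ** Ri)" by (simp add: Ri)
  also have "\<dots> = (conj_transpose Ri ** R) ** Ri" by (simp only: matrix_mul_assoc)
  also have "\<dots> = Ri" using \<open>conj_transpose Ri ** R = mat 1\<close> by simp
  finally show ?thesis .
qed

lemma Rhi_ct: "conj_transpose Rhi = Rhi"
proof -
  have "conj_transpose Rhi = conj_transpose Ri ** conj_transpose Rh" unfolding Rhi_def by (rule ct_mult)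
  also have "\<dots> = Ri ** Rh" by (simp only: Ri_ct Rh_ct)
  also have "\<dots> = Rhi" unfolding Rhi_def by (rule RiRh)
  finally show ?thesis .
qed

lemma RhiRhi: "Rhi ** Rhi = Ri"
proof -
  have "Rhi ** Rhi = Rh ** (Ri ** Rh) ** Ri" by (simp only: Rhi_def matrix_mul_assoc)
  also have "\<dots> = Rh ** (Rh ** Ri) ** Ri" by (simp only: RiRh)
  also have "\<dots> = (Rh ** Rh) ** (Ri ** Ri)" by (simp only: matrix_mul_assoc)
  also have "\<dots> = (R ** Ri) ** Ri" by (simp only: Rh(2) matrix_mul_assoc)
  also have "\<dots> = Ri" by (simp add: Ri)
  finally show ?thesis .
qed

lemma RhiRh: "Rhi ** Rh = mat 1" "Rh ** Rhi = mat 1"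
proof -
  have "Rhi ** Rh = Rh ** (Ri ** Rh)" by (simp only: Rhi_def matrix_mul_assoc)
  also have "\<dots> = (Rh ** Rh) ** Ri" by (simp only: RiRh matrix_mul_assoc)
  also have "\<dots> = mat 1" by (simp add: Rh Ri)
  finally show "Rhi ** Rh = mat 1" .
  have "Rh ** Rhi = (Rh ** Rh) ** Ri" by (simp only: Rhi_def matrix_mul_assoc)
  also have "\<dots> = mat 1" by (simp add: Rh Ri)
  finally show "Rh ** Rhi = mat 1" .
qed

lemma MP_pd:
  assumes pP: "pos_def P"
  shows "pos_def (Rh ** P ** Rh)"
  unfolding pos_def_inner
proof (intro conjI allI impI)
  show "hermitian (Rh ** P ** Rh)"
    using herm_pd[OF pP] by (simp add: hermitian_def ct_mult Rh_ct matrix_mul_assoc)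
  fix x :: "complex^'n" assume x: "x \<noteq> 0"
  have "Rh *v x \<noteq> 0"
  proof
    assume "Rh *v x = 0"
    hence "Rhi *v (Rh *v x) = 0" by simp
    hence "x = 0" by (simp add: matrix_vector_mul_assoc RhiRh)
    thus False using x by simp
  qed
  hence "0 < (Rh *v x) \<bullet> (P *v (Rh *v x))" using pP by (simp add: pos_def_inner)
  also have "\<dots> = x \<bullet> (Rh *v (P *v (Rh *v x)))"
    using Rh(1) by (simp add: herm_sa pos_def_inner)
  also have "\<dots> = x \<bullet> ((Rh ** P ** Rh) *v x)" by (simp add: matrix_vector_mul_assoc matrix_mul_assoc)
  finally show "0 < x \<bullet> ((Rh ** P ** Rh) *v x)" .
qed

lemma XX_eq: "XX R P = Rhi ** msqrt (Rh ** P ** Rh)"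
  by (simp add: XX_def Rhi_def Rh_def Ri_def)

lemma XX_ct:
  assumes pP: "pos_def P"
  shows "conj_transpose (XX R P) = msqrt (Rh ** P ** Rh) ** Rhi"
    and "XX R P ** conj_transpose (XX R P) = P"
proof -
  define A where "A = msqrt (Rh ** P ** Rh)"
  have A: "pos_def A" "A ** A = Rh ** P ** Rh" using msqrt_props[OF MP_pd[OF pP]] by (auto simp: A_def)
  have Act: "conj_transpose A = A" using A(1) by (rule herm_pd)
  show "conj_transpose (XX R P) = msqrt (Rh ** P ** Rh) ** Rhi"
    by (simp add: XX_eq ct_mult Act Rhi_ct A_def[symmetric])
  have "XX R P ** conj_transpose (XX R P) = Rhi ** (A ** A) ** Rhi"
    by (simp add: XX_eq ct_mult Act Rhi_ct A_def[symmetric] matrix_mul_assoc)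
  also have "\<dots> = (Rhi ** Rh) ** P ** (Rh ** Rhi)" by (simp only: A(2) matrix_mul_assoc)
  also have "\<dots> = P" by (simp add: RhiRh)
  finally show "XX R P ** conj_transpose (XX R P) = P" .
qed

lemma fid:
  assumes pP: "pos_def P" and pQ: "pos_def Q"
  shows "gen_fidelity R P Q = trace (conj_transpose (XX R P) ** XX R Q)"
proof -
  have "conj_transpose (XX R P) ** XX R Q
     = msqrt (Rh ** P ** Rh) ** (Rhi ** Rhi) ** msqrt (Rh ** Q ** Rh)"
    by (simp only: XX_ct(1)[OF pP]) (simp only: XX_eq matrix_mul_assoc)
  also have "\<dots> = msqrt (Rh ** P ** Rh) ** Ri ** msqrt (Rh ** Q ** Rh)"
    by (simp only: RhiRhi)
  finally show ?thesis by (simp add: gen_fidelity_def Rh_def Ri_def)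
qed

lemma tr:
  assumes pP: "pos_def P"
  shows "Re (trace P) = XX R P \<bullet> XX R P"
proof -
  have "Re (trace P) = Re (trace (XX R P ** conj_transpose (XX R P)))" by (simp add: XX_ct(2)[OF pP])
  also have "\<dots> = Re (trace (conj_transpose (XX R P) ** XX R P))" by (simp only: trace_mul_sym[of "XX R P"])
  also have "\<dots> = XX R P \<bullet> XX R P" by (rule trace_frob)
  finally show ?thesis .
qed

lemma bures_sq:
  assumes pP: "pos_def P" and pQ: "pos_def Q"
  shows "gen_bures_sq R P Q = (dist (XX R P) (XX R Q))^2"
proof -
  have "gen_bures_sq R P Q = XX R P \<bullet> XX R P + XX R Q \<bullet> XX R Q - 2 * (XX R P \<bullet> XX R Q)"
    by (simp add: gen_bures_sq_def trace_add tr[OF pP] tr[OF pQ] fid[OF pP pQ] trace_frob)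
  also have "\<dots> = (XX R P - XX R Q) \<bullet> (XX R P - XX R Q)"
    by (simp add: inner_diff_left inner_diff_right inner_commute)
  also have "\<dots> = (dist (XX R P) (XX R Q))^2" by (simp add: dist_norm power2_norm_eq_inner)
  finally show ?thesis .
qed

lemma bures:
  assumes pP: "pos_def P" and pQ: "pos_def Q"
  shows "gen_bures R P Q = dist (XX R P) (XX R Q)"
  by (simp add: gen_bures_def bures_sq[OF pP pQ])

end

theorem mainTheorem3:
  fixes R P Q S :: "complex^'d^'d"
  assumes "pos_def R" and "pos_def P" and "pos_def Q" and "pos_def S"
  shows "gen_bures R P Q = gen_bures R Q P
    \<and> gen_bures_sq R P Q \<ge> 0
    \<and> (gen_bures R P Q = 0 \<longleftrightarrow> P = Q)
    \<and> gen_bures R P Q \<le> gen_bures R P S + gen_bures R S Q"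
proof -
  interpret rctx R using assms(1) by unfold_locales
  have "(gen_bures R P Q = 0 \<longleftrightarrow> P = Q)"
  proof
    assume "gen_bures R P Q = 0"
    hence "XX R P = XX R Q" using bures[OF assms(2,3)] by simp
    thus "P = Q" using XX_ct(2)[OF assms(2)] XX_ct(2)[OF assms(3)] by metis
  next
    assume "P = Q" thus "gen_bures R P Q = 0" using bures[OF assms(2,3)] by simp
  qed
  moreover have "gen_bures R P Q = gen_bures R Q P"
    using bures[OF assms(2,3)] bures[OF assms(3,2)] by (simp add: dist_commute)
  moreover have "gen_bures_sq R P Q \<ge> 0" using bures_sq[OF assms(2,3)] by simp
  moreover have "gen_bures R P Q \<le> gen_bures R P S + gen_bures R S Q"
    using bures[OF assms(2,3)] bures[OF assms(2,4)] bures[OF assms(4,3)] by (simp add: dist_triangle)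
  ultimately show ?thesis by blast
qed

end
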